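(* Let $\mathcal{B}$ be a complete topological ring and let $\mathrm{e}\colon\mathcal{B}\to\mathcal{B}\{T\}$ be a restricted exponential homomorphism. Let $S\subseteq\mathcal{B}^{\mathrm{e}}$ be a multiplicatively closed subset, let $\tilde j\colon\mathcal{B}\to\widehat{S^{-1}\mathcal{B}}$ be the separated completed localization homomorphism and let $\tilde j_T\colon\mathcal{B}\{T\}\to\widehat{S^{-1}\mathcal{B}}\{T\}$ be the induced homomorphism $\sum_ib_iT^i\mapsto\sum_i\tilde j(b_i)T^i$. Then there exists a unique restricted exponential homomorphism $\widehat{S^{-1}\mathrm{e}}\colon\widehat{S^{-1}\mathcal{B}}\to\widehat{S^{-1}\mathcal{B}}\{T\}$ such that $\tilde j_T\circ\mathrm{e}=\widehat{S^{-1}\mathrm{e}}\circ\tilde j$.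
   Context: Conventions: topological rings are linearly topologized with a countable fundamental system of open ideals; homomorphisms are continuous; complete means the canonical map to $\varprojlim_{\mathfrak{a}}\mathcal{B}/\mathfrak{a}$ (open ideals, discrete quotients) is a topological isomorphism. For complete $\mathcal{C}$, $\mathcal{C}\{T\}$, $\mathcal{C}\{T,T'\}$ denote restricted power series (coefficients converging to $0$), topologized by the ideals of series with all coefficients in a given open ideal. A restricted exponential homomorphism of a complete ring $\mathcal{C}$ is a continuous ring homomorphism $\mathrm{e}\colon\mathcal{C}\to\mathcal{C}\{T\}$, $\mathrm{e}(c)=\sum_i\mathrm{e}_i(c)T^i$, with $\mathrm{e}_0=\mathrm{id}$ and $\sum_{i,j}\mathrm{e}_j(\mathrm{e}_i(c))T'^jT^i=\sum_\ell\mathrm{e}_\ell(c)(T+T')^\ell$ for all $c$. $\mathcal{B}^{\mathrm{e}}=\{b:\mathrm{e}(b)=b\}$. A multiplicatively closed subset contains $1$ and is stable under multiplication. The separated completed localization $\widehat{S^{-1}\mathcal{B}}$ is the separated completion of $S^{-1}\mathcal{B}$ for the linear topology with fundamental system of ideals $S^{-1}\mathfrak{b}$, $\mathfrak{b}$ open in $\mathcal{B}$, and $\tilde j$ is the composite $\mathcal{B}\to S^{-1}\mathcal{B}\to\widehat{S^{-1}\mathcal{B}}$. *)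

theory Defs
  imports "HOL-Algebra.Algebra"
begin

text \<open>A topological ring is a commutative ring R (HOL-Algebra record) together with a
  decreasing sequence I of ideals forming a fundamental system of open ideals
  (an ideal is open iff it contains some I n).\<close>

definition lin_top_ring :: "('a, 'b) ring_scheme \<Rightarrow> (nat \<Rightarrow> 'a set) \<Rightarrow> bool" where
  "lin_top_ring R I \<longleftrightarrow> cring R \<and> (\<forall>n. ideal (I n) R) \<and> (\<forall>n. I (Suc n) \<subseteq> I n)"

definition top_coset :: "('a, 'b) ring_scheme \<Rightarrow> (nat \<Rightarrow> 'a set) \<Rightarrow> nat \<Rightarrow> 'a \<Rightarrow> 'a set" where
  "top_coset R I n b = {b \<oplus>\<^bsub>R\<^esub> x | x. x \<in> I n}"

text \<open>The inverse limit of the discrete quotients R / I n (compatible families of cosets).\<close>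
definition inv_limit :: "('a, 'b) ring_scheme \<Rightarrow> (nat \<Rightarrow> 'a set) \<Rightarrow> (nat \<Rightarrow> 'a set) set" where
  "inv_limit R I = {x. (\<forall>n. \<exists>b\<in>carrier R. x n = top_coset R I n b) \<and> (\<forall>n. x (Suc n) \<subseteq> x n)}"

definition canon_lim :: "('a, 'b) ring_scheme \<Rightarrow> (nat \<Rightarrow> 'a set) \<Rightarrow> 'a \<Rightarrow> nat \<Rightarrow> 'a set" where
  "canon_lim R I b = (\<lambda>n. top_coset R I n b)"

text \<open>Complete: the canonical map to the inverse limit is bijective (it is then automatically
  a topological isomorphism, since it maps I n onto the kernel of the n-th projection).\<close>
definition complete_ring :: "('a, 'b) ring_scheme \<Rightarrow> (nat \<Rightarrow> 'a set) \<Rightarrow> bool" where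
  "complete_ring R I \<longleftrightarrow> lin_top_ring R I \<and> bij_betw (canon_lim R I) (carrier R) (inv_limit R I)"

definition rser :: "('a, 'b) ring_scheme \<Rightarrow> (nat \<Rightarrow> 'a set) \<Rightarrow> (nat \<Rightarrow> 'a) set" where
  "rser R I = {f. (\<forall>i. f i \<in> carrier R) \<and> (\<forall>n. \<exists>N. \<forall>i\<ge>N. f i \<in> I n)}"

definition ser_mult :: "('a, 'b) ring_scheme \<Rightarrow> (nat \<Rightarrow> 'a) \<Rightarrow> (nat \<Rightarrow> 'a) \<Rightarrow> nat \<Rightarrow> 'a" where
  "ser_mult R f g = (\<lambda>i. finsum R (\<lambda>k. f k \<otimes>\<^bsub>R\<^esub> g (i - k)) {..i})"

text \<open>A map e : R -> R{T}, written e c i = e_i(c).  The cocycle condition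
  sum_{i,j} e_j(e_i(c)) T'^j T^i = sum_l e_l(c) (T+T')^l in R{T,T'} is stated by comparing
  coefficients of T^i T'^j: e_j(e_i(c)) = binom(i+j, i) e_{i+j}(c).
  Continuity (R{T} topologized by series with all coefficients in I n) means: for every n there is
  m with e(I m) contained in the series with all coefficients in I n.\<close>
definition rexp :: "('a, 'b) ring_scheme \<Rightarrow> (nat \<Rightarrow> 'a set) \<Rightarrow> ('a \<Rightarrow> nat \<Rightarrow> 'a) \<Rightarrow> bool" where
  "rexp R I e \<longleftrightarrow>
     complete_ring R I \<and>
     (\<forall>c\<in>carrier R. e c \<in> rser R I) \<and>
     (\<forall>c\<in>carrier R. \<forall>d\<in>carrier R. e (c \<oplus>\<^bsub>R\<^esub> d) = (\<lambda>i. e c i \<oplus>\<^bsub>R\<^esub> e d i)) \<and>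
     (\<forall>c\<in>carrier R. \<forall>d\<in>carrier R. e (c \<otimes>\<^bsub>R\<^esub> d) = ser_mult R (e c) (e d)) \<and>
     e \<one>\<^bsub>R\<^esub> = (\<lambda>i. if i = 0 then \<one>\<^bsub>R\<^esub> else \<zero>\<^bsub>R\<^esub>) \<and>
     (\<forall>n. \<exists>m. \<forall>c\<in>I m. \<forall>i. e c i \<in> I n) \<and>
     (\<forall>c\<in>carrier R. e c 0 = c) \<and>
     (\<forall>c\<in>carrier R. \<forall>i j. e (e c i) j = add_pow R ((i + j) choose i) (e c (i + j)))"

definition fixed_elems :: "('a, 'b) ring_scheme \<Rightarrow> ('a \<Rightarrow> nat \<Rightarrow> 'a) \<Rightarrow> 'a set" where
  "fixed_elems R e = {b \<in> carrier R. e b = (\<lambda>i. if i = 0 then b else \<zero>\<^bsub>R\<^esub>)}"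

text \<open>Elements of S^{-1}R are fractions (a,s), s in S.  Modulo the ideal S^{-1}(I n),
  (a,s) and (b,t) are identified iff u(at - bs) is in I n for some u in S.\<close>
definition loc_rel :: "('a, 'b) ring_scheme \<Rightarrow> (nat \<Rightarrow> 'a set) \<Rightarrow> 'a set \<Rightarrow> nat \<Rightarrow> 'a \<times> 'a \<Rightarrow> 'a \<times> 'a \<Rightarrow> bool" where
  "loc_rel R I S n p q \<longleftrightarrow> p \<in> carrier R \<times> S \<and> q \<in> carrier R \<times> S \<and>
     (\<exists>u\<in>S. u \<otimes>\<^bsub>R\<^esub> (fst p \<otimes>\<^bsub>R\<^esub> snd q \<ominus>\<^bsub>R\<^esub> fst q \<otimes>\<^bsub>R\<^esub> snd p) \<in> I n)"

definition loc_class :: "('a, 'b) ring_scheme \<Rightarrow> (nat \<Rightarrow> 'a set) \<Rightarrow> 'a set \<Rightarrow> nat \<Rightarrow> 'a \<times> 'a \<Rightarrow> ('a \<times> 'a) set" where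
  "loc_class R I S n p = {q. loc_rel R I S n p q}"

definition frac_add :: "('a, 'b) ring_scheme \<Rightarrow> 'a \<times> 'a \<Rightarrow> 'a \<times> 'a \<Rightarrow> 'a \<times> 'a" where
  "frac_add R p q = (fst p \<otimes>\<^bsub>R\<^esub> snd q \<oplus>\<^bsub>R\<^esub> fst q \<otimes>\<^bsub>R\<^esub> snd p, snd p \<otimes>\<^bsub>R\<^esub> snd q)"

definition frac_mult :: "('a, 'b) ring_scheme \<Rightarrow> 'a \<times> 'a \<Rightarrow> 'a \<times> 'a \<Rightarrow> 'a \<times> 'a" where
  "frac_mult R p q = (fst p \<otimes>\<^bsub>R\<^esub> fst q, snd p \<otimes>\<^bsub>R\<^esub> snd q)"

text \<open>The separated completion of S^{-1}R: inverse limit of S^{-1}R / S^{-1}(I n),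
  with levelwise ring operations.\<close>
definition cloc :: "('a, 'b) ring_scheme \<Rightarrow> (nat \<Rightarrow> 'a set) \<Rightarrow> 'a set \<Rightarrow> (nat \<Rightarrow> ('a \<times> 'a) set) ring" where
  "cloc R I S =
    \<lparr>carrier = {x. (\<forall>n. \<exists>p \<in> carrier R \<times> S. x n = loc_class R I S n p) \<and> (\<forall>n. x (Suc n) \<subseteq> x n)},
     monoid.mult = (\<lambda>x y. \<lambda>n. {r. \<exists>p\<in>x n. \<exists>q\<in>y n. loc_rel R I S n (frac_mult R p q) r}),
     monoid.one = (\<lambda>n. loc_class R I S n (\<one>\<^bsub>R\<^esub>, \<one>\<^bsub>R\<^esub>)),
     ring.zero = (\<lambda>n. loc_class R I S n (\<zero>\<^bsub>R\<^esub>, \<one>\<^bsub>R\<^esub>)),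
     ring.add = (\<lambda>x y. \<lambda>n. {r. \<exists>p\<in>x n. \<exists>q\<in>y n. loc_rel R I S n (frac_add R p q) r})\<rparr>"

text \<open>Its fundamental system of open ideals: kernels of the projections to the levels.\<close>
definition cloc_top :: "('a, 'b) ring_scheme \<Rightarrow> (nat \<Rightarrow> 'a set) \<Rightarrow> 'a set \<Rightarrow> nat \<Rightarrow> (nat \<Rightarrow> ('a \<times> 'a) set) set" where
  "cloc_top R I S n = {x \<in> carrier (cloc R I S). x n = \<zero>\<^bsub>cloc R I S\<^esub> n}"

definition cloc_j :: "('a, 'b) ring_scheme \<Rightarrow> (nat \<Rightarrow> 'a set) \<Rightarrow> 'a set \<Rightarrow> 'a \<Rightarrow> nat \<Rightarrow> ('a \<times> 'a) set" where
  "cloc_j R I S b = (\<lambda>n. loc_class R I S n (b, \<one>\<^bsub>R\<^esub>))"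

end

theory Submission
  imports Defs
begin

lemma finsum_delta0:
  fixes R (structure) and i :: nat
  assumes "cring R" "u \<in> carrier R" "\<And>k. f k \<in> carrier R"
  shows "finsum R (\<lambda>k. (if k = 0 then u else \<zero>) \<otimes> f (i - k)) {..i} = u \<otimes> f i"
proof -
  interpret cring R by fact
  have "finsum R (\<lambda>k. (if k = 0 then u else \<zero>) \<otimes> f (i - k)) {..i}
      = finsum R (\<lambda>k. if 0 = k then u \<otimes> f (i - k) else \<zero>) {..i}"
    using assms by (intro finsum_cong') auto
  also have "\<dots> = u \<otimes> f (i - 0)"
    using assms by (intro finsum_singleton) auto
  finally show ?thesis by simp
qed

lemma finsum_delta0':
  fixes R (structure) and i :: nat
  assumes "cring R" "u \<in> carrier R" "\<And>k. f k \<in> carrier R"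
  shows "finsum R (\<lambda>k. f k \<otimes> (if i - k = 0 then u else \<zero>)) {..i} = f i \<otimes> u"
proof -
  interpret cring R by fact
  have "finsum R (\<lambda>k. f k \<otimes> (if i - k = 0 then u else \<zero>)) {..i}
      = finsum R (\<lambda>k. if i = k then f k \<otimes> u else \<zero>) {..i}"
    using assms by (intro finsum_cong') (auto intro: le_antisym)
  also have "\<dots> = f i \<otimes> u"
    using assms by (intro finsum_singleton) auto
  finally show ?thesis .
qed


locale LS = cring R for R :: "('a, 'b) ring_scheme" (structure) +
  fixes I :: "nat \<Rightarrow> 'a set" and S :: "'a set"
  assumes idl: "\<And>n. ideal (I n) R"
    and dec: "\<And>n. I (Suc n) \<subseteq> I n"
    and S_sub: "S \<subseteq> carrier R"
    and one_S: "\<one> \<in> S"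
    and S_mult: "\<And>s t. s \<in> S \<Longrightarrow> t \<in> S \<Longrightarrow> s \<otimes> t \<in> S"
begin

abbreviation "rel \<equiv> loc_rel R I S"
abbreviation "cls \<equiv> loc_class R I S"
abbreviation "C \<equiv> cloc R I S"

lemma S_car[simp]: "s \<in> S \<Longrightarrow> s \<in> carrier R"
  by (rule subsetD[OF S_sub])

lemma I_car: "x \<in> I n \<Longrightarrow> x \<in> carrier R"
  using additive_subgroup.a_subset[OF ideal.axioms(1)[OF idl]] by blast

lemma I_add: "x \<in> I n \<Longrightarrow> y \<in> I n \<Longrightarrow> x \<oplus> y \<in> I n"
  by (rule additive_subgroup.a_closed[OF ideal.axioms(1)[OF idl]])

lemma I_zero: "\<zero> \<in> I n"
  by (rule additive_subgroup.zero_closed[OF ideal.axioms(1)[OF idl]])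

lemma I_neg: "x \<in> I n \<Longrightarrow> \<ominus> x \<in> I n"
  by (rule additive_subgroup.a_inv_closed[OF ideal.axioms(1)[OF idl]])

lemma I_lm: "x \<in> I n \<Longrightarrow> c \<in> carrier R \<Longrightarrow> c \<otimes> x \<in> I n"
  by (rule ideal.I_l_closed[OF idl])

lemma I_anti: "n \<le> m \<Longrightarrow> I m \<subseteq> I n"
proof (induction m rule: dec_induct)
  case (step k) thus ?case using dec[of k] by blast
qed simp

lemma rel_def2: "rel n p q \<longleftrightarrow> p \<in> carrier R \<times> S \<and> q \<in> carrier R \<times> S \<and>
     (\<exists>u\<in>S. u \<otimes> (fst p \<otimes> snd q \<ominus> fst q \<otimes> snd p) \<in> I n)"
  by (simp add: loc_rel_def)

lemma rel_car: "rel n p q \<Longrightarrow> p \<in> carrier R \<times> S \<and> q \<in> carrier R \<times> S"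
  by (simp add: loc_rel_def)

lemma rel_eqI:
  assumes "p \<in> carrier R \<times> S" "q \<in> carrier R \<times> S" "fst p \<otimes> snd q = fst q \<otimes> snd p"
  shows "rel n p q"
proof -
  have "\<one> \<otimes> (fst p \<otimes> snd q \<ominus> fst q \<otimes> snd p) = \<zero>"
    using assms by (auto simp: r_neg minus_eq)
  hence "\<exists>u\<in>S. u \<otimes> (fst p \<otimes> snd q \<ominus> fst q \<otimes> snd p) \<in> I n"
    using one_S I_zero by (intro bexI[of _ "\<one>"]) auto
  thus ?thesis using assms by (simp add: rel_def2)
qed

lemma rel_refl: "p \<in> carrier R \<times> S \<Longrightarrow> rel n p p"
  by (rule rel_eqI) auto

lemma alg1: "a \<in> carrier R \<Longrightarrow> b \<in> carrier R \<Longrightarrow> c \<in> carrier R \<Longrightarrow> d \<in> carrier R \<Longrightarrow> u \<in> carrier R \<Longrightarrow>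
  u \<otimes> (a \<otimes> b \<ominus> c \<otimes> d) = \<ominus> (u \<otimes> (c \<otimes> d \<ominus> a \<otimes> b))"
  by algebra

lemma alg2: "\<lbrakk>a\<in>carrier R; b\<in>carrier R; s\<in>carrier R; t\<in>carrier R; u \<in> carrier R; v\<in>carrier R; c \<in> carrier R; r \<in> carrier R\<rbrakk> \<Longrightarrow>
  u \<otimes> v \<otimes> t \<otimes> (a \<otimes> r \<ominus> c \<otimes> s) = (v \<otimes> r) \<otimes> (u \<otimes> (a \<otimes> t \<ominus> b \<otimes> s)) \<oplus> (u \<otimes> s) \<otimes> (v \<otimes> (b \<otimes> r \<ominus> c \<otimes> t))"
  by algebra

lemma rel_sym: assumes "rel n p q" shows "rel n q p"
proof -
  obtain u where u: "u \<in> S" "u \<otimes> (fst p \<otimes> snd q \<ominus> fst q \<otimes> snd p) \<in> I n"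
    and c: "p \<in> carrier R \<times> S" "q \<in> carrier R \<times> S" using assms unfolding rel_def2 by blast
  have "u \<otimes> (fst q \<otimes> snd p \<ominus> fst p \<otimes> snd q) = \<ominus> (u \<otimes> (fst p \<otimes> snd q \<ominus> fst q \<otimes> snd p))"
    using c u by (intro alg1) auto
  hence "\<exists>u\<in>S. u \<otimes> (fst q \<otimes> snd p \<ominus> fst p \<otimes> snd q) \<in> I n"
    using I_neg[OF u(2)] u(1) by (intro bexI[of _ u]) simp_all
  thus ?thesis using c by (simp add: rel_def2)
qed

lemma rel_trans: assumes "rel n p q" "rel n q r" shows "rel n p r"
proof -
  obtain u where u: "u \<in> S" "u \<otimes> (fst p \<otimes> snd q \<ominus> fst q \<otimes> snd p) \<in> I n"
    and c: "p \<in> carrier R \<times> S" "q \<in> carrier R \<times> S" using assms(1) unfolding rel_def2 by blast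
  obtain v where v: "v \<in> S" "v \<otimes> (fst q \<otimes> snd r \<ominus> fst r \<otimes> snd q) \<in> I n"
    and c2: "r \<in> carrier R \<times> S" using assms(2) unfolding rel_def2 by blast
  have "u \<otimes> v \<otimes> snd q \<otimes> (fst p \<otimes> snd r \<ominus> fst r \<otimes> snd p) =
     (v \<otimes> snd r) \<otimes> (u \<otimes> (fst p \<otimes> snd q \<ominus> fst q \<otimes> snd p)) \<oplus> (u \<otimes> snd p) \<otimes> (v \<otimes> (fst q \<otimes> snd r \<ominus> fst r \<otimes> snd q))"
    using c c2 u v by (intro alg2) auto
  moreover have "\<dots> \<in> I n" using c c2 u v by (intro I_add I_lm[OF u(2)] I_lm[OF v(2)]) auto
  moreover have "u \<otimes> v \<otimes> snd q \<in> S" using u v c by (auto intro!: S_mult)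
  ultimately have "\<exists>w\<in>S. w \<otimes> (fst p \<otimes> snd r \<ominus> fst r \<otimes> snd p) \<in> I n"
    by (intro bexI[of _ "u \<otimes> v \<otimes> snd q"]) simp_all
  thus ?thesis using c c2 by (simp add: rel_def2)
qed

lemma rel_mono: assumes "rel m p q" "n \<le> m" shows "rel n p q"
  using assms I_anti[OF assms(2)] unfolding rel_def2 by blast

lemma cls_def2: "cls n p = {q. rel n p q}"
  by (simp add: loc_class_def)

lemma cls_self: "p \<in> carrier R \<times> S \<Longrightarrow> p \<in> cls n p"
  by (simp add: cls_def2 rel_refl)

lemma cls_eqI: assumes "rel n p q" shows "cls n p = cls n q"
proof -
  have h: "rel n q r \<longleftrightarrow> rel n p r" for r
    using rel_trans[OF assms] rel_trans[OF rel_sym[OF assms]] by blast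
  show ?thesis by (simp add: cls_def2 h)
qed

lemma cls_eq_iff: assumes "p \<in> carrier R \<times> S" shows "cls n p = cls n q \<longleftrightarrow> rel n p q"
proof
  assume "cls n p = cls n q"
  hence "p \<in> cls n q" using cls_self[OF assms] by metis
  thus "rel n p q" by (simp add: cls_def2 rel_sym)
qed (rule cls_eqI)

lemma cls_mem: "q \<in> cls n p \<Longrightarrow> cls n p = cls n q"
  by (rule cls_eqI) (simp add: cls_def2)

lemma cls_car: "q \<in> cls n p \<Longrightarrow> q \<in> carrier R \<times> S"
  by (simp add: cls_def2 rel_car)

lemma cls_mono: "n \<le> m \<Longrightarrow> cls m p \<subseteq> cls n p"
  unfolding cls_def2 using rel_mono by blast

lemma rel_eqI':
  "a \<in> carrier R \<Longrightarrow> s \<in> S \<Longrightarrow> b \<in> carrier R \<Longrightarrow> t \<in> S \<Longrightarrow> a \<otimes> t = b \<otimes> s \<Longrightarrow> rel n (a, s) (b, t)"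
  by (rule rel_eqI) auto

lemma rel_intro':
  "a \<in> carrier R \<Longrightarrow> s \<in> S \<Longrightarrow> b \<in> carrier R \<Longrightarrow> t \<in> S \<Longrightarrow> u \<in> S \<Longrightarrow> u \<otimes> (a \<otimes> t \<ominus> b \<otimes> s) \<in> I n
   \<Longrightarrow> rel n (a, s) (b, t)"
  unfolding rel_def2 by auto

lemma rel_elim':
  assumes "rel n (a, s) (b, t)"
  obtains u where "a \<in> carrier R" "s \<in> S" "b \<in> carrier R" "t \<in> S" "u \<in> S" "u \<otimes> (a \<otimes> t \<ominus> b \<otimes> s) \<in> I n"
  using assms unfolding rel_def2 by auto

lemma fadd_car: "p \<in> carrier R \<times> S \<Longrightarrow> q \<in> carrier R \<times> S \<Longrightarrow> frac_add R p q \<in> carrier R \<times> S"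
  by (auto simp: frac_add_def S_mult)

lemma fmult_car: "p \<in> carrier R \<times> S \<Longrightarrow> q \<in> carrier R \<times> S \<Longrightarrow> frac_mult R p q \<in> carrier R \<times> S"
  by (auto simp: frac_mult_def S_mult)

lemma alg_add_resp: "\<lbrakk>a\<in>carrier R; b\<in>carrier R; s\<in>carrier R; t\<in>carrier R; u \<in> carrier R; v\<in>carrier R;
   a' \<in> carrier R; b' \<in> carrier R; s' \<in> carrier R; t' \<in> carrier R\<rbrakk> \<Longrightarrow>
  (u \<otimes> v) \<otimes> ((a \<otimes> t \<oplus> b \<otimes> s) \<otimes> (s' \<otimes> t') \<ominus> (a' \<otimes> t' \<oplus> b' \<otimes> s') \<otimes> (s \<otimes> t)) =
   (v \<otimes> t \<otimes> t') \<otimes> (u \<otimes> (a \<otimes> s' \<ominus> a' \<otimes> s)) \<oplus> (u \<otimes> s \<otimes> s') \<otimes> (v \<otimes> (b \<otimes> t' \<ominus> b' \<otimes> t))"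
  by algebra

lemma alg_mult_resp: "\<lbrakk>a\<in>carrier R; b\<in>carrier R; s\<in>carrier R; t\<in>carrier R; u \<in> carrier R; v\<in>carrier R;
   a' \<in> carrier R; b' \<in> carrier R; s' \<in> carrier R; t' \<in> carrier R\<rbrakk> \<Longrightarrow>
  (u \<otimes> v) \<otimes> ((a \<otimes> b) \<otimes> (s' \<otimes> t') \<ominus> (a' \<otimes> b') \<otimes> (s \<otimes> t)) =
   (v \<otimes> b \<otimes> t') \<otimes> (u \<otimes> (a \<otimes> s' \<ominus> a' \<otimes> s)) \<oplus> (u \<otimes> a' \<otimes> s) \<otimes> (v \<otimes> (b \<otimes> t' \<ominus> b' \<otimes> t))"
  by algebra

lemma add_resp: assumes "rel n p p'" "rel n q q'" shows "rel n (frac_add R p q) (frac_add R p' q')"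
proof -
  obtain a s a' s' where pp: "p = (a, s)" "p' = (a', s')" by fastforce
  obtain b t b' t' where qq: "q = (b, t)" "q' = (b', t')" by fastforce
  obtain u where u: "a \<in> carrier R" "s \<in> S" "a' \<in> carrier R" "s' \<in> S" "u \<in> S" "u \<otimes> (a \<otimes> s' \<ominus> a' \<otimes> s) \<in> I n"
    using assms(1) pp rel_elim' by metis
  obtain v where v: "b \<in> carrier R" "t \<in> S" "b' \<in> carrier R" "t' \<in> S" "v \<in> S" "v \<otimes> (b \<otimes> t' \<ominus> b' \<otimes> t) \<in> I n"
    using assms(2) qq rel_elim' by metis
  show ?thesis unfolding pp qq frac_add_def fst_conv snd_conv
    apply (rule rel_intro'[where u="u \<otimes> v"])
    using u v apply (simp_all add: S_mult)
    apply (subst alg_add_resp, simp_all)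
    apply (intro I_add I_lm[OF u(6)] I_lm[OF v(6)], simp_all)
    done
qed

lemma mult_resp: assumes "rel n p p'" "rel n q q'" shows "rel n (frac_mult R p q) (frac_mult R p' q')"
proof -
  obtain a s a' s' where pp: "p = (a, s)" "p' = (a', s')" by fastforce
  obtain b t b' t' where qq: "q = (b, t)" "q' = (b', t')" by fastforce
  obtain u where u: "a \<in> carrier R" "s \<in> S" "a' \<in> carrier R" "s' \<in> S" "u \<in> S" "u \<otimes> (a \<otimes> s' \<ominus> a' \<otimes> s) \<in> I n"
    using assms(1) pp rel_elim' by metis
  obtain v where v: "b \<in> carrier R" "t \<in> S" "b' \<in> carrier R" "t' \<in> S" "v \<in> S" "v \<otimes> (b \<otimes> t' \<ominus> b' \<otimes> t) \<in> I n"
    using assms(2) qq rel_elim' by metis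
  show ?thesis unfolding pp qq frac_mult_def fst_conv snd_conv
    apply (rule rel_intro'[where u="u \<otimes> v"])
    using u v apply (simp_all add: S_mult)
    apply (subst alg_mult_resp, simp_all)
    apply (intro I_add I_lm[OF u(6)] I_lm[OF v(6)], simp_all)
    done
qed

lemma lift:
  assumes car: "\<And>p q. p \<in> carrier R \<times> S \<Longrightarrow> q \<in> carrier R \<times> S \<Longrightarrow> f p q \<in> carrier R \<times> S"
    and resp: "\<And>p p' q q'. rel n p p' \<Longrightarrow> rel n q q' \<Longrightarrow> rel n (f p q) (f p' q')"
    and p0: "p0 \<in> carrier R \<times> S" and q0: "q0 \<in> carrier R \<times> S"
  shows "{r. \<exists>p\<in>cls n p0. \<exists>q\<in>cls n q0. rel n (f p q) r} = cls n (f p0 q0)"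
proof (rule subset_antisym; rule subsetI)
  fix r assume "r \<in> {r. \<exists>p\<in>cls n p0. \<exists>q\<in>cls n q0. rel n (f p q) r}"
  then obtain p q where "rel n p0 p" "rel n q0 q" "rel n (f p q) r" by (auto simp: cls_def2)
  hence "rel n (f p0 q0) r" using resp rel_trans by blast
  thus "r \<in> cls n (f p0 q0)" by (simp add: cls_def2)
next
  fix r assume "r \<in> cls n (f p0 q0)"
  thus "r \<in> {r. \<exists>p\<in>cls n p0. \<exists>q\<in>cls n q0. rel n (f p q) r}"
    using cls_self[OF p0] cls_self[OF q0] unfolding cls_def2 by blast
qed

lemma Ccar: "x \<in> carrier C \<longleftrightarrow> (\<forall>n. \<exists>p\<in>carrier R \<times> S. x n = cls n p) \<and> (\<forall>n. x (Suc n) \<subseteq> x n)"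
  by (simp add: cloc_def)

lemma Cadd: "x \<oplus>\<^bsub>C\<^esub> y = (\<lambda>n. {r. \<exists>p\<in>x n. \<exists>q\<in>y n. rel n (frac_add R p q) r})"
  by (simp add: cloc_def)

lemma Cmult: "x \<otimes>\<^bsub>C\<^esub> y = (\<lambda>n. {r. \<exists>p\<in>x n. \<exists>q\<in>y n. rel n (frac_mult R p q) r})"
  by (simp add: cloc_def)

lemma Czero: "\<zero>\<^bsub>C\<^esub> = (\<lambda>n. cls n (\<zero>, \<one>))"
  by (simp add: cloc_def)

lemma Cone: "\<one>\<^bsub>C\<^esub> = (\<lambda>n. cls n (\<one>, \<one>))"
  by (simp add: cloc_def)

lemma Cdec: assumes "x \<in> carrier C" "n \<le> m" shows "x m \<subseteq> x n"
  using assms(2)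
proof (induction m rule: dec_induct)
  case (step k) thus ?case using assms(1) unfolding Ccar by blast
qed simp

lemma Clvl: assumes "x \<in> carrier C" "p \<in> x n" shows "x n = cls n p" "p \<in> carrier R \<times> S"
proof -
  obtain p0 where "p0 \<in> carrier R \<times> S" "x n = cls n p0" using assms(1) unfolding Ccar by blast
  thus "x n = cls n p" "p \<in> carrier R \<times> S" using assms(2) cls_mem cls_car by auto
qed

lemma Crep: assumes "x \<in> carrier C" obtains a s where "(a, s) \<in> x n" "a \<in> carrier R" "s \<in> S"
proof -
  obtain p0 where "p0 \<in> carrier R \<times> S" "x n = cls n p0" using assms(1) unfolding Ccar by blast
  thus ?thesis using that cls_self by (cases p0) fastforce
qed

lemma CmemI:
  assumes "\<And>n. x n = cls n (g n)" "\<And>n. g n \<in> carrier R \<times> S" "\<And>n. rel n (g (Suc n)) (g n)"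
  shows "x \<in> carrier C"
  unfolding Ccar
proof (intro conjI allI)
  fix n
  show "\<exists>p\<in>carrier R \<times> S. x n = cls n p" using assms by blast
  have "x (Suc n) \<subseteq> cls n (g (Suc n))" using assms(1) cls_mono[of n "Suc n"] by auto
  also have "\<dots> = cls n (g n)" using cls_eqI[OF assms(3)] by simp
  finally show "x (Suc n) \<subseteq> x n" using assms(1) by simp
qed

lemma Cadd_lvl: assumes "x \<in> carrier C" "y \<in> carrier C" "p \<in> x n" "q \<in> y n"
  shows "(x \<oplus>\<^bsub>C\<^esub> y) n = cls n (frac_add R p q)"
proof -
  have "(x \<oplus>\<^bsub>C\<^esub> y) n = {r. \<exists>p\<in>cls n p. \<exists>q\<in>cls n q. rel n (frac_add R p q) r}"
    using Clvl[OF assms(1,3)] Clvl[OF assms(2,4)] by (simp add: Cadd)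
  also have "\<dots> = cls n (frac_add R p q)"
    by (rule lift) (use fadd_car add_resp Clvl assms in auto)
  finally show ?thesis .
qed

lemma Cmult_lvl: assumes "x \<in> carrier C" "y \<in> carrier C" "p \<in> x n" "q \<in> y n"
  shows "(x \<otimes>\<^bsub>C\<^esub> y) n = cls n (frac_mult R p q)"
proof -
  have "(x \<otimes>\<^bsub>C\<^esub> y) n = {r. \<exists>p\<in>cls n p. \<exists>q\<in>cls n q. rel n (frac_mult R p q) r}"
    using Clvl[OF assms(1,3)] Clvl[OF assms(2,4)] by (simp add: Cmult)
  also have "\<dots> = cls n (frac_mult R p q)"
    by (rule lift) (use fmult_car mult_resp Clvl assms in auto)
  finally show ?thesis .
qed

definition "rp x n = (SOME p. p \<in> x n)"

lemma rp_in: assumes "x \<in> carrier C" shows "rp x n \<in> x n"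
proof -
  obtain a s where "(a, s) \<in> x n" by (rule Crep[OF assms])
  thus ?thesis unfolding rp_def by (rule someI)
qed

lemma rp_car: "x \<in> carrier C \<Longrightarrow> rp x n \<in> carrier R \<times> S"
  using rp_in Clvl by blast

lemma rp_fst: "x \<in> carrier C \<Longrightarrow> fst (rp x n) \<in> carrier R"
  using rp_car by (auto simp: mem_Times_iff)

lemma rp_snd: "x \<in> carrier C \<Longrightarrow> snd (rp x n) \<in> S"
  using rp_car by (auto simp: mem_Times_iff)

lemma rp_rel: assumes "x \<in> carrier C" shows "rel n (rp x (Suc n)) (rp x n)"
proof -
  have "rp x (Suc n) \<in> x n" using rp_in[OF assms] Cdec[OF assms, of n "Suc n"] by auto
  hence "rp x (Suc n) \<in> cls n (rp x n)" using Clvl[OF assms rp_in[OF assms]] by simp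
  thus ?thesis by (simp add: cls_def2 rel_sym)
qed

lemma Cadd_closed: assumes "x \<in> carrier C" "y \<in> carrier C" shows "x \<oplus>\<^bsub>C\<^esub> y \<in> carrier C"
  by (rule CmemI[where g="\<lambda>n. frac_add R (rp x n) (rp y n)"])
     (use assms Cadd_lvl rp_in rp_car fadd_car add_resp rp_rel in auto)

lemma Cmult_closed: assumes "x \<in> carrier C" "y \<in> carrier C" shows "x \<otimes>\<^bsub>C\<^esub> y \<in> carrier C"
  by (rule CmemI[where g="\<lambda>n. frac_mult R (rp x n) (rp y n)"])
     (use assms Cmult_lvl rp_in rp_car fmult_car mult_resp rp_rel in auto)

lemma Czero_closed: "\<zero>\<^bsub>C\<^esub> \<in> carrier C"
  by (rule CmemI[where g="\<lambda>n. (\<zero>, \<one>)"]) (auto simp: Czero one_S intro!: rel_refl)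

lemma Cone_closed: "\<one>\<^bsub>C\<^esub> \<in> carrier C"
  by (rule CmemI[where g="\<lambda>n. (\<one>, \<one>)"]) (auto simp: Cone one_S intro!: rel_refl)

lemma Cadd_mem: "x \<in> carrier C \<Longrightarrow> y \<in> carrier C \<Longrightarrow> p \<in> x n \<Longrightarrow> q \<in> y n \<Longrightarrow> frac_add R p q \<in> (x \<oplus>\<^bsub>C\<^esub> y) n"
  using Cadd_lvl cls_self fadd_car Clvl(2) by metis

lemma Cmult_mem: "x \<in> carrier C \<Longrightarrow> y \<in> carrier C \<Longrightarrow> p \<in> x n \<Longrightarrow> q \<in> y n \<Longrightarrow> frac_mult R p q \<in> (x \<otimes>\<^bsub>C\<^esub> y) n"
  using Cmult_lvl cls_self fmult_car Clvl(2) by metis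

lemma Czero_mem: "(\<zero>, \<one>) \<in> \<zero>\<^bsub>C\<^esub> n"
  by (simp add: Czero cls_self one_S)

lemma Cone_mem: "(\<one>, \<one>) \<in> \<one>\<^bsub>C\<^esub> n"
  by (simp add: Cone cls_self one_S)

lemma C_ext: assumes "x \<in> carrier C" "y \<in> carrier C" "\<And>n. \<exists>p. p \<in> x n \<and> p \<in> y n" shows "x = y"
proof
  fix n obtain p where "p \<in> x n" "p \<in> y n" using assms(3) by blast
  thus "x n = y n" using Clvl assms by metis
qed

lemma C_ext2: assumes "x \<in> carrier C" "y \<in> carrier C" "\<And>n. \<exists>p q. p \<in> x n \<and> q \<in> y n \<and> rel n p q" shows "x = y"
proof
  fix n obtain p q where "p \<in> x n" "q \<in> y n" "rel n p q" using assms(3) by blast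
  thus "x n = y n" using Clvl assms cls_eqI by metis
qed

definition "negC x = (\<lambda>n. cls n (\<ominus> fst (rp x n), snd (rp x n)))"

lemma neg_resp: assumes "rel n p q" shows "rel n (\<ominus> fst p, snd p) (\<ominus> fst q, snd q)"
proof -
  obtain a s b t where pp: "p = (a, s)" "q = (b, t)" by fastforce
  obtain u where u: "a \<in> carrier R" "s \<in> S" "b \<in> carrier R" "t \<in> S" "u \<in> S" "u \<otimes> (a \<otimes> t \<ominus> b \<otimes> s) \<in> I n"
    using assms pp rel_elim' by metis
  have "u \<otimes> (\<ominus> a \<otimes> t \<ominus> \<ominus> b \<otimes> s) = \<ominus> (u \<otimes> (a \<otimes> t \<ominus> b \<otimes> s))"
    using u S_car[OF u(2)] S_car[OF u(4)] S_car[OF u(5)] by algebra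
  thus ?thesis unfolding pp fst_conv snd_conv using u I_neg[OF u(6)]
    by (intro rel_intro'[where u=u]) auto
qed

lemma negC_closed: "x \<in> carrier C \<Longrightarrow> negC x \<in> carrier C"
  unfolding negC_def
  by (rule CmemI[where g="\<lambda>n. (\<ominus> fst (rp x n), snd (rp x n))"])
     (use rp_fst rp_snd neg_resp rp_rel in auto)

lemma negC_mem: "x \<in> carrier C \<Longrightarrow> (\<ominus> fst (rp x n), snd (rp x n)) \<in> negC x n"
  unfolding negC_def using rp_fst rp_snd by (intro cls_self) auto

lemma rel_eqX: "a \<otimes> t = b \<otimes> s \<Longrightarrow> a \<in> carrier R \<Longrightarrow> s \<in> S \<Longrightarrow> b \<in> carrier R \<Longrightarrow> t \<in> S \<Longrightarrow> rel n (a, s) (b, t)"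
  by (rule rel_eqI') auto

lemma C_add_assoc: assumes "x \<in> carrier C" "y \<in> carrier C" "z \<in> carrier C"
  shows "(x \<oplus>\<^bsub>C\<^esub> y) \<oplus>\<^bsub>C\<^esub> z = x \<oplus>\<^bsub>C\<^esub> (y \<oplus>\<^bsub>C\<^esub> z)"
proof (rule C_ext2)
  show "(x \<oplus>\<^bsub>C\<^esub> y) \<oplus>\<^bsub>C\<^esub> z \<in> carrier C" "x \<oplus>\<^bsub>C\<^esub> (y \<oplus>\<^bsub>C\<^esub> z) \<in> carrier C"
    using Czero_closed Cone_closed by (auto intro!: Cadd_closed Cmult_closed assms)
  fix n
  obtain a s where X: "(a, s) \<in> x n" "a \<in> carrier R" "s \<in> S" by (rule Crep[OF assms(1)])
  obtain b t where Y: "(b, t) \<in> y n" "b \<in> carrier R" "t \<in> S" by (rule Crep[OF assms(2)])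
  obtain c r where Z: "(c, r) \<in> z n" "c \<in> carrier R" "r \<in> S" by (rule Crep[OF assms(3)])
  have p: "frac_add R (frac_add R (a, s) (b, t)) (c, r) \<in> ((x \<oplus>\<^bsub>C\<^esub> y) \<oplus>\<^bsub>C\<^esub> z) n"
    by (intro Cadd_mem Cadd_closed Cmult_closed assms Czero_mem Cone_mem Czero_closed Cone_closed X(1) Y(1) Z(1))
  have q: "frac_add R (a, s) (frac_add R (b, t) (c, r)) \<in> (x \<oplus>\<^bsub>C\<^esub> (y \<oplus>\<^bsub>C\<^esub> z)) n"
    by (intro Cadd_mem Cadd_closed Cmult_closed assms Czero_mem Cone_mem Czero_closed Cone_closed X(1) Y(1) Z(1))
  have "rel n (frac_add R (frac_add R (a, s) (b, t)) (c, r)) (frac_add R (a, s) (frac_add R (b, t) (c, r)))"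
    unfolding frac_add_def frac_mult_def fst_conv snd_conv
    apply (rule rel_eqX)
    subgoal using X(2) S_car[OF X(3)] Y(2) S_car[OF Y(3)] Z(2) S_car[OF Z(3)] one_closed zero_closed by algebra
    by (use X Y Z one_S in \<open>auto intro!: S_mult\<close>)
  thus "\<exists>p q. p \<in> ((x \<oplus>\<^bsub>C\<^esub> y) \<oplus>\<^bsub>C\<^esub> z) n \<and> q \<in> (x \<oplus>\<^bsub>C\<^esub> (y \<oplus>\<^bsub>C\<^esub> z)) n \<and> rel n p q" using p q by blast
qed

lemma C_add_comm: assumes "x \<in> carrier C" "y \<in> carrier C"
  shows "x \<oplus>\<^bsub>C\<^esub> y = y \<oplus>\<^bsub>C\<^esub> x"
proof (rule C_ext2)
  show "x \<oplus>\<^bsub>C\<^esub> y \<in> carrier C" "y \<oplus>\<^bsub>C\<^esub> x \<in> carrier C"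
    using Czero_closed Cone_closed by (auto intro!: Cadd_closed Cmult_closed assms)
  fix n
  obtain a s where X: "(a, s) \<in> x n" "a \<in> carrier R" "s \<in> S" by (rule Crep[OF assms(1)])
  obtain b t where Y: "(b, t) \<in> y n" "b \<in> carrier R" "t \<in> S" by (rule Crep[OF assms(2)])
  have p: "frac_add R (a, s) (b, t) \<in> (x \<oplus>\<^bsub>C\<^esub> y) n"
    by (intro Cadd_mem Cadd_closed Cmult_closed assms Czero_mem Cone_mem Czero_closed Cone_closed X(1) Y(1))
  have q: "frac_add R (b, t) (a, s) \<in> (y \<oplus>\<^bsub>C\<^esub> x) n"
    by (intro Cadd_mem Cadd_closed Cmult_closed assms Czero_mem Cone_mem Czero_closed Cone_closed X(1) Y(1))
  have "rel n (frac_add R (a, s) (b, t)) (frac_add R (b, t) (a, s))"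
    unfolding frac_add_def frac_mult_def fst_conv snd_conv
    apply (rule rel_eqX)
    subgoal using X(2) S_car[OF X(3)] Y(2) S_car[OF Y(3)] one_closed zero_closed by algebra
    by (use X Y one_S in \<open>auto intro!: S_mult\<close>)
  thus "\<exists>p q. p \<in> (x \<oplus>\<^bsub>C\<^esub> y) n \<and> q \<in> (y \<oplus>\<^bsub>C\<^esub> x) n \<and> rel n p q" using p q by blast
qed

lemma C_mult_assoc: assumes "x \<in> carrier C" "y \<in> carrier C" "z \<in> carrier C"
  shows "(x \<otimes>\<^bsub>C\<^esub> y) \<otimes>\<^bsub>C\<^esub> z = x \<otimes>\<^bsub>C\<^esub> (y \<otimes>\<^bsub>C\<^esub> z)"
proof (rule C_ext2)
  show "(x \<otimes>\<^bsub>C\<^esub> y) \<otimes>\<^bsub>C\<^esub> z \<in> carrier C" "x \<otimes>\<^bsub>C\<^esub> (y \<otimes>\<^bsub>C\<^esub> z) \<in> carrier C"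
    using Czero_closed Cone_closed by (auto intro!: Cadd_closed Cmult_closed assms)
  fix n
  obtain a s where X: "(a, s) \<in> x n" "a \<in> carrier R" "s \<in> S" by (rule Crep[OF assms(1)])
  obtain b t where Y: "(b, t) \<in> y n" "b \<in> carrier R" "t \<in> S" by (rule Crep[OF assms(2)])
  obtain c r where Z: "(c, r) \<in> z n" "c \<in> carrier R" "r \<in> S" by (rule Crep[OF assms(3)])
  have p: "frac_mult R (frac_mult R (a, s) (b, t)) (c, r) \<in> ((x \<otimes>\<^bsub>C\<^esub> y) \<otimes>\<^bsub>C\<^esub> z) n"
    by (intro Cmult_mem Cadd_closed Cmult_closed assms Czero_mem Cone_mem Czero_closed Cone_closed X(1) Y(1) Z(1))
  have q: "frac_mult R (a, s) (frac_mult R (b, t) (c, r)) \<in> (x \<otimes>\<^bsub>C\<^esub> (y \<otimes>\<^bsub>C\<^esub> z)) n"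
    by (intro Cmult_mem Cadd_closed Cmult_closed assms Czero_mem Cone_mem Czero_closed Cone_closed X(1) Y(1) Z(1))
  have "rel n (frac_mult R (frac_mult R (a, s) (b, t)) (c, r)) (frac_mult R (a, s) (frac_mult R (b, t) (c, r)))"
    unfolding frac_add_def frac_mult_def fst_conv snd_conv
    apply (rule rel_eqX)
    subgoal using X(2) S_car[OF X(3)] Y(2) S_car[OF Y(3)] Z(2) S_car[OF Z(3)] one_closed zero_closed by algebra
    by (use X Y Z one_S in \<open>auto intro!: S_mult\<close>)
  thus "\<exists>p q. p \<in> ((x \<otimes>\<^bsub>C\<^esub> y) \<otimes>\<^bsub>C\<^esub> z) n \<and> q \<in> (x \<otimes>\<^bsub>C\<^esub> (y \<otimes>\<^bsub>C\<^esub> z)) n \<and> rel n p q" using p q by blast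
qed

lemma C_mult_comm: assumes "x \<in> carrier C" "y \<in> carrier C"
  shows "x \<otimes>\<^bsub>C\<^esub> y = y \<otimes>\<^bsub>C\<^esub> x"
proof (rule C_ext2)
  show "x \<otimes>\<^bsub>C\<^esub> y \<in> carrier C" "y \<otimes>\<^bsub>C\<^esub> x \<in> carrier C"
    using Czero_closed Cone_closed by (auto intro!: Cadd_closed Cmult_closed assms)
  fix n
  obtain a s where X: "(a, s) \<in> x n" "a \<in> carrier R" "s \<in> S" by (rule Crep[OF assms(1)])
  obtain b t where Y: "(b, t) \<in> y n" "b \<in> carrier R" "t \<in> S" by (rule Crep[OF assms(2)])
  have p: "frac_mult R (a, s) (b, t) \<in> (x \<otimes>\<^bsub>C\<^esub> y) n"
    by (intro Cmult_mem Cadd_closed Cmult_closed assms Czero_mem Cone_mem Czero_closed Cone_closed X(1) Y(1))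
  have q: "frac_mult R (b, t) (a, s) \<in> (y \<otimes>\<^bsub>C\<^esub> x) n"
    by (intro Cmult_mem Cadd_closed Cmult_closed assms Czero_mem Cone_mem Czero_closed Cone_closed X(1) Y(1))
  have "rel n (frac_mult R (a, s) (b, t)) (frac_mult R (b, t) (a, s))"
    unfolding frac_add_def frac_mult_def fst_conv snd_conv
    apply (rule rel_eqX)
    subgoal using X(2) S_car[OF X(3)] Y(2) S_car[OF Y(3)] one_closed zero_closed by algebra
    by (use X Y one_S in \<open>auto intro!: S_mult\<close>)
  thus "\<exists>p q. p \<in> (x \<otimes>\<^bsub>C\<^esub> y) n \<and> q \<in> (y \<otimes>\<^bsub>C\<^esub> x) n \<and> rel n p q" using p q by blast
qed

lemma C_l_zero: assumes "x \<in> carrier C"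
  shows "\<zero>\<^bsub>C\<^esub> \<oplus>\<^bsub>C\<^esub> x = x"
proof (rule C_ext2)
  show "\<zero>\<^bsub>C\<^esub> \<oplus>\<^bsub>C\<^esub> x \<in> carrier C" "x \<in> carrier C"
    using Czero_closed Cone_closed by (auto intro!: Cadd_closed Cmult_closed assms)
  fix n
  obtain a s where X: "(a, s) \<in> x n" "a \<in> carrier R" "s \<in> S" by (rule Crep[OF assms(1)])
  have p: "frac_add R (\<zero>, \<one>) (a, s) \<in> (\<zero>\<^bsub>C\<^esub> \<oplus>\<^bsub>C\<^esub> x) n"
    by (intro Cadd_mem Cadd_closed Cmult_closed assms Czero_mem Cone_mem Czero_closed Cone_closed X(1))
  have q: "(a, s) \<in> (x) n"
    by (intro  Cadd_closed Cmult_closed assms Czero_mem Cone_mem Czero_closed Cone_closed X(1))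
  have "rel n (frac_add R (\<zero>, \<one>) (a, s)) ((a, s))"
    unfolding frac_add_def frac_mult_def fst_conv snd_conv
    apply (rule rel_eqX)
    subgoal using X(2) S_car[OF X(3)] one_closed zero_closed by algebra
    by (use X one_S in \<open>auto intro!: S_mult\<close>)
  thus "\<exists>p q. p \<in> (\<zero>\<^bsub>C\<^esub> \<oplus>\<^bsub>C\<^esub> x) n \<and> q \<in> (x) n \<and> rel n p q" using p q by blast
qed

lemma C_l_one: assumes "x \<in> carrier C"
  shows "\<one>\<^bsub>C\<^esub> \<otimes>\<^bsub>C\<^esub> x = x"
proof (rule C_ext2)
  show "\<one>\<^bsub>C\<^esub> \<otimes>\<^bsub>C\<^esub> x \<in> carrier C" "x \<in> carrier C"
    using Czero_closed Cone_closed by (auto intro!: Cadd_closed Cmult_closed assms)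
  fix n
  obtain a s where X: "(a, s) \<in> x n" "a \<in> carrier R" "s \<in> S" by (rule Crep[OF assms(1)])
  have p: "frac_mult R (\<one>, \<one>) (a, s) \<in> (\<one>\<^bsub>C\<^esub> \<otimes>\<^bsub>C\<^esub> x) n"
    by (intro Cmult_mem Cadd_closed Cmult_closed assms Czero_mem Cone_mem Czero_closed Cone_closed X(1))
  have q: "(a, s) \<in> (x) n"
    by (intro  Cadd_closed Cmult_closed assms Czero_mem Cone_mem Czero_closed Cone_closed X(1))
  have "rel n (frac_mult R (\<one>, \<one>) (a, s)) ((a, s))"
    unfolding frac_add_def frac_mult_def fst_conv snd_conv
    apply (rule rel_eqX)
    subgoal using X(2) S_car[OF X(3)] one_closed zero_closed by algebra
    by (use X one_S in \<open>auto intro!: S_mult\<close>)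
  thus "\<exists>p q. p \<in> (\<one>\<^bsub>C\<^esub> \<otimes>\<^bsub>C\<^esub> x) n \<and> q \<in> (x) n \<and> rel n p q" using p q by blast
qed

lemma C_l_distr: assumes "x \<in> carrier C" "y \<in> carrier C" "z \<in> carrier C"
  shows "(x \<oplus>\<^bsub>C\<^esub> y) \<otimes>\<^bsub>C\<^esub> z = x \<otimes>\<^bsub>C\<^esub> z \<oplus>\<^bsub>C\<^esub> y \<otimes>\<^bsub>C\<^esub> z"
proof (rule C_ext2)
  show "(x \<oplus>\<^bsub>C\<^esub> y) \<otimes>\<^bsub>C\<^esub> z \<in> carrier C" "x \<otimes>\<^bsub>C\<^esub> z \<oplus>\<^bsub>C\<^esub> y \<otimes>\<^bsub>C\<^esub> z \<in> carrier C"
    using Czero_closed Cone_closed by (auto intro!: Cadd_closed Cmult_closed assms)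
  fix n
  obtain a s where X: "(a, s) \<in> x n" "a \<in> carrier R" "s \<in> S" by (rule Crep[OF assms(1)])
  obtain b t where Y: "(b, t) \<in> y n" "b \<in> carrier R" "t \<in> S" by (rule Crep[OF assms(2)])
  obtain c r where Z: "(c, r) \<in> z n" "c \<in> carrier R" "r \<in> S" by (rule Crep[OF assms(3)])
  have p: "frac_mult R (frac_add R (a, s) (b, t)) (c, r) \<in> ((x \<oplus>\<^bsub>C\<^esub> y) \<otimes>\<^bsub>C\<^esub> z) n"
    by (intro Cmult_mem Cadd_mem Cadd_closed Cmult_closed assms Czero_mem Cone_mem Czero_closed Cone_closed X(1) Y(1) Z(1))
  have q: "frac_add R (frac_mult R (a, s) (c, r)) (frac_mult R (b, t) (c, r)) \<in> (x \<otimes>\<^bsub>C\<^esub> z \<oplus>\<^bsub>C\<^esub> y \<otimes>\<^bsub>C\<^esub> z) n"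
    by (intro Cadd_mem Cmult_mem Cadd_closed Cmult_closed assms Czero_mem Cone_mem Czero_closed Cone_closed X(1) Y(1) Z(1))
  have "rel n (frac_mult R (frac_add R (a, s) (b, t)) (c, r)) (frac_add R (frac_mult R (a, s) (c, r)) (frac_mult R (b, t) (c, r)))"
    unfolding frac_add_def frac_mult_def fst_conv snd_conv
    apply (rule rel_eqX)
    subgoal using X(2) S_car[OF X(3)] Y(2) S_car[OF Y(3)] Z(2) S_car[OF Z(3)] one_closed zero_closed by algebra
    by (use X Y Z one_S in \<open>auto intro!: S_mult\<close>)
  thus "\<exists>p q. p \<in> ((x \<oplus>\<^bsub>C\<^esub> y) \<otimes>\<^bsub>C\<^esub> z) n \<and> q \<in> (x \<otimes>\<^bsub>C\<^esub> z \<oplus>\<^bsub>C\<^esub> y \<otimes>\<^bsub>C\<^esub> z) n \<and> rel n p q" using p q by blast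
qed

lemma C_l_inv: assumes "x \<in> carrier C" shows "negC x \<oplus>\<^bsub>C\<^esub> x = \<zero>\<^bsub>C\<^esub>"
proof (rule C_ext2)
  show "negC x \<oplus>\<^bsub>C\<^esub> x \<in> carrier C" "\<zero>\<^bsub>C\<^esub> \<in> carrier C"
    using Czero_closed by (auto intro!: Cadd_closed negC_closed assms)
  fix n
  obtain a s where rs: "rp x n = (a, s)" by fastforce
  have X: "a \<in> carrier R" "s \<in> S" using rp_fst[OF assms] rp_snd[OF assms] rs by (metis fst_conv snd_conv)+
  have p: "frac_add R (\<ominus> a, s) (a, s) \<in> (negC x \<oplus>\<^bsub>C\<^esub> x) n"
    using Cadd_mem[OF negC_closed[OF assms] assms negC_mem[OF assms, of n] rp_in[OF assms, of n]] rs by simp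
  have "rel n (frac_add R (\<ominus> a, s) (a, s)) (\<zero>, \<one>)"
    unfolding frac_add_def fst_conv snd_conv
    apply (rule rel_eqX)
    subgoal using X(1) S_car[OF X(2)] by algebra
    by (use X one_S in \<open>auto intro!: S_mult\<close>)
  thus "\<exists>p q. p \<in> (negC x \<oplus>\<^bsub>C\<^esub> x) n \<and> q \<in> \<zero>\<^bsub>C\<^esub> n \<and> rel n p q" using p Czero_mem by blast
qed

lemma C_cring: "cring C"
proof (rule cringI)
  show "abelian_group C"
    apply (rule abelian_groupI)
    apply (erule (1) Cadd_closed)
    apply (rule Czero_closed)
    apply (erule (2) C_add_assoc)
    apply (erule (1) C_add_comm)
    apply (erule C_l_zero)
    subgoal for x using C_l_inv[of x] negC_closed[of x] by blast
    done
  show "comm_monoid C"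
    apply (rule comm_monoidI)
    apply (erule (1) Cmult_closed)
    apply (rule Cone_closed)
    apply (erule (2) C_mult_assoc)
    apply (erule C_l_one)
    apply (erule (1) C_mult_comm)
    done
qed (rule C_l_distr)

end

sublocale LS \<subseteq> CC: cring C by (rule C_cring)

context LS begin

lemma Cadd_cong: "x n = x' n \<Longrightarrow> y n = y' n \<Longrightarrow> (x \<oplus>\<^bsub>C\<^esub> y) n = (x' \<oplus>\<^bsub>C\<^esub> y') n"
  by (simp add: Cadd)

lemma Cmult_cong: "x n = x' n \<Longrightarrow> y n = y' n \<Longrightarrow> (x \<otimes>\<^bsub>C\<^esub> y) n = (x' \<otimes>\<^bsub>C\<^esub> y') n"
  by (simp add: Cmult)

abbreviation "T \<equiv> cloc_top R I S"

lemma Tdef: "T n = {x \<in> carrier C. x n = \<zero>\<^bsub>C\<^esub> n}"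
  by (simp add: cloc_top_def)

lemma Cminus_lvl: assumes "x \<in> carrier C" "y \<in> carrier C" "x n = y n"
  shows "(x \<ominus>\<^bsub>C\<^esub> y) n = \<zero>\<^bsub>C\<^esub> n"
proof -
  have "(x \<ominus>\<^bsub>C\<^esub> y) n = (y \<oplus>\<^bsub>C\<^esub> \<ominus>\<^bsub>C\<^esub> y) n"
    unfolding CC.minus_eq by (rule Cadd_cong) (use assms in auto)
  thus ?thesis using assms by (simp add: CC.r_neg)
qed

lemma Cminus_lvl_rev: assumes "x \<in> carrier C" "y \<in> carrier C" "(x \<ominus>\<^bsub>C\<^esub> y) n = \<zero>\<^bsub>C\<^esub> n"
  shows "x n = y n"
proof -
  have "x = (x \<ominus>\<^bsub>C\<^esub> y) \<oplus>\<^bsub>C\<^esub> y" using assms(1,2)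
    by (simp add: CC.minus_eq CC.a_assoc CC.l_neg)
  hence "x n = (\<zero>\<^bsub>C\<^esub> \<oplus>\<^bsub>C\<^esub> y) n" using assms Cadd_cong by metis
  thus ?thesis using assms by simp
qed

lemma lvl_mono: assumes "x \<in> carrier C" "y \<in> carrier C" "x m = y m" "n \<le> m" shows "x n = y n"
proof -
  obtain p where p: "p \<in> x m" using Crep[OF assms(1)] by metis
  hence "p \<in> x n" "p \<in> y n" using Cdec assms by (blast, metis subsetD)
  thus ?thesis using Clvl assms(1,2) by metis
qed

lemma T_ideal: "ideal (T n) C"
proof (rule idealI)
  show "ring C" by (rule CC.ring_axioms)
  show "subgroup (T n) (add_monoid C)"
  proof (rule CC.add.subgroupI)
    show "T n \<subseteq> carrier C" by (auto simp: Tdef)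
    show "T n \<noteq> {}" using Czero_closed by (auto simp: Tdef)
    fix a b assume a: "a \<in> T n" and b: "b \<in> T n"
    show "\<ominus>\<^bsub>C\<^esub> a \<in> T n"
    proof -
      have "(\<zero>\<^bsub>C\<^esub> \<ominus>\<^bsub>C\<^esub> a) n = \<zero>\<^bsub>C\<^esub> n"
        using a Czero_closed by (intro Cminus_lvl) (auto simp: Tdef)
      thus ?thesis using a by (auto simp: Tdef CC.minus_eq)
    qed
    show "a \<oplus>\<^bsub>C\<^esub> b \<in> T n"
    proof -
      have "(a \<oplus>\<^bsub>C\<^esub> b) n = (\<zero>\<^bsub>C\<^esub> \<oplus>\<^bsub>C\<^esub> \<zero>\<^bsub>C\<^esub>) n"
        using a b by (intro Cadd_cong) (auto simp: Tdef)
      thus ?thesis using a b Czero_closed by (auto simp: Tdef)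
    qed
  qed
  fix a x assume a: "a \<in> T n" and x: "x \<in> carrier C"
  have "(x \<otimes>\<^bsub>C\<^esub> a) n = (x \<otimes>\<^bsub>C\<^esub> \<zero>\<^bsub>C\<^esub>) n"
    using a by (intro Cmult_cong) (auto simp: Tdef)
  thus "x \<otimes>\<^bsub>C\<^esub> a \<in> T n" using a x by (auto simp: Tdef)
  thus "a \<otimes>\<^bsub>C\<^esub> x \<in> T n" using a x by (simp add: CC.m_comm Tdef)
qed

lemma T_dec: "T (Suc n) \<subseteq> T n"
proof
  fix x assume "x \<in> T (Suc n)"
  hence "x \<in> carrier C" "x (Suc n) = \<zero>\<^bsub>C\<^esub> (Suc n)" by (auto simp: Tdef)
  hence "x n = \<zero>\<^bsub>C\<^esub> n" using lvl_mono[of x "\<zero>\<^bsub>C\<^esub>" "Suc n" n] Czero_closed by auto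
  thus "x \<in> T n" using \<open>x \<in> carrier C\<close> by (simp add: Tdef)
qed

lemma coset_char: assumes "x \<in> carrier C" shows "top_coset C T n x = {z \<in> carrier C. z n = x n}"
proof (rule subset_antisym; rule subsetI)
  fix z assume "z \<in> top_coset C T n x"
  then obtain y where y: "y \<in> T n" "z = x \<oplus>\<^bsub>C\<^esub> y" by (auto simp: top_coset_def)
  have "y n = \<zero>\<^bsub>C\<^esub> n" using y by (simp add: Tdef)
  hence "z n = (x \<oplus>\<^bsub>C\<^esub> \<zero>\<^bsub>C\<^esub>) n" unfolding y(2) by (intro Cadd_cong) auto
  thus "z \<in> {z \<in> carrier C. z n = x n}" using y assms by (auto simp: Tdef)
next
  fix z assume z: "z \<in> {z \<in> carrier C. z n = x n}"
  hence "z \<ominus>\<^bsub>C\<^esub> x \<in> T n" using assms Cminus_lvl by (auto simp: Tdef)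
  moreover have "z = x \<oplus>\<^bsub>C\<^esub> (z \<ominus>\<^bsub>C\<^esub> x)" using z assms
    using CC.a_lcomm[of x z "\<ominus>\<^bsub>C\<^esub> x"] by (simp add: CC.minus_eq CC.r_neg)
  ultimately show "z \<in> top_coset C T n x" by (auto simp: top_coset_def)
qed

lemma C_complete: "complete_ring C T"
  unfolding complete_ring_def lin_top_ring_def
proof (intro conjI allI)
  show "cring C" by (rule C_cring)
  show "ideal (T n) C" for n by (rule T_ideal)
  show "T (Suc n) \<subseteq> T n" for n by (rule T_dec)
  show "bij_betw (canon_lim C T) (carrier C) (inv_limit C T)"
    unfolding bij_betw_def
  proof (intro conjI)
    show "inj_on (canon_lim C T) (carrier C)"
    proof (rule inj_onI)
      fix x y assume x: "x \<in> carrier C" and y: "y \<in> carrier C" and eq: "canon_lim C T x = canon_lim C T y"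
      show "x = y"
      proof
        fix n
        have "top_coset C T n x = top_coset C T n y" using eq by (metis canon_lim_def)
        hence "x \<in> {z \<in> carrier C. z n = y n}" using coset_char[OF x, of n] coset_char[OF y, of n] x by auto
        thus "x n = y n" by simp
      qed
    qed
    show "canon_lim C T ` carrier C = inv_limit C T"
    proof (rule subset_antisym; rule subsetI)
      fix w assume "w \<in> canon_lim C T ` carrier C"
      then obtain x where x: "x \<in> carrier C" "w = canon_lim C T x" by auto
      have "w (Suc n) \<subseteq> w n" for n
      proof
        fix u assume "u \<in> w (Suc n)"
        hence u: "u \<in> carrier C" "u (Suc n) = x (Suc n)" using x coset_char[OF x(1)] by (auto simp: canon_lim_def)
        hence "u n = x n" using lvl_mono[OF u(1) x(1), of "Suc n" n] by simp
        thus "u \<in> w n" using u x coset_char[OF x(1)] by (auto simp: canon_lim_def)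
      qed
      thus "w \<in> inv_limit C T" using x by (auto simp: inv_limit_def canon_lim_def)
    next
      fix w assume "w \<in> inv_limit C T"
      hence w1: "\<forall>n. \<exists>b\<in>carrier C. w n = top_coset C T n b" and w2: "\<And>n. w (Suc n) \<subseteq> w n"
        by (auto simp: inv_limit_def)
      obtain b where b: "\<And>n. b n \<in> carrier C" "\<And>n. w n = top_coset C T n (b n)" using w1 by metis
      have bb: "b (Suc n) n = b n n" for n
      proof -
        have "b (Suc n) \<in> w (Suc n)" using b coset_char by auto
        hence "b (Suc n) \<in> w n" using w2 by blast
        thus ?thesis using b coset_char by auto
      qed
      define z where "z = (\<lambda>n. b n n)"
      have z: "z \<in> carrier C" unfolding Ccar
      proof (intro conjI allI)
        fix n
        show "\<exists>p\<in>carrier R \<times> S. z n = cls n p" using b(1)[of n] unfolding z_def Ccar by blast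
        have "z (Suc n) \<subseteq> b (Suc n) n" unfolding z_def using Cdec[OF b(1), of n "Suc n"] by auto
        thus "z (Suc n) \<subseteq> z n" using bb by (simp add: z_def)
      qed
      have "top_coset C T n z = w n" for n
        unfolding coset_char[OF z] b(2)[of n] coset_char[OF b(1)[of n]] by (simp add: z_def)
      hence "canon_lim C T z = w"
        unfolding canon_lim_def by auto
      thus "w \<in> canon_lim C T ` carrier C" using z by auto
    qed
  qed
qed

lemma T_anti: "n \<le> m \<Longrightarrow> T m \<subseteq> T n"
proof (induction m rule: dec_induct)
  case (step k) thus ?case using T_dec[of k] by blast
qed simp

definition "J b = (\<lambda>n. cls n (b, \<one>))"
definition "U s = (\<lambda>n. cls n (\<one>, s))"

lemma J_eq: "cloc_j R I S b = J b" by (simp add: cloc_j_def J_def)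

lemma J_closed: "b \<in> carrier R \<Longrightarrow> J b \<in> carrier C"
  unfolding J_def by (rule CmemI[where g="\<lambda>n. (b, \<one>)"]) (auto simp: one_S intro!: rel_refl)

lemma U_closed: "s \<in> S \<Longrightarrow> U s \<in> carrier C"
  unfolding U_def by (rule CmemI[where g="\<lambda>n. (\<one>, s)"]) (auto simp: one_S intro!: rel_refl)

lemma J_mem: "b \<in> carrier R \<Longrightarrow> (b, \<one>) \<in> J b n"
  unfolding J_def by (rule cls_self) (simp add: one_S)

lemma U_mem: "s \<in> S \<Longrightarrow> (\<one>, s) \<in> U s n"
  unfolding U_def by (rule cls_self) (simp add: one_S)

lemma J_zero: "J \<zero> = \<zero>\<^bsub>C\<^esub>" by (simp add: J_def Czero)

lemma UJ: assumes "s \<in> S" shows "U s \<otimes>\<^bsub>C\<^esub> J s = \<one>\<^bsub>C\<^esub>"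
proof (rule C_ext2)
  show "U s \<otimes>\<^bsub>C\<^esub> J s \<in> carrier C" "\<one>\<^bsub>C\<^esub> \<in> carrier C"
    using assms by (auto intro!: Cmult_closed U_closed J_closed Cone_closed)
  fix n
  have "frac_mult R (\<one>, s) (s, \<one>) \<in> (U s \<otimes>\<^bsub>C\<^esub> J s) n"
    using assms by (intro Cmult_mem U_closed J_closed U_mem J_mem) auto
  moreover have "rel n (frac_mult R (\<one>, s) (s, \<one>)) (\<one>, \<one>)"
    unfolding frac_mult_def fst_conv snd_conv using assms one_S by (intro rel_eqX) (auto intro!: S_mult)
  ultimately show "\<exists>p q. p \<in> (U s \<otimes>\<^bsub>C\<^esub> J s) n \<and> q \<in> \<one>\<^bsub>C\<^esub> n \<and> rel n p q" using Cone_mem by blast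
qed

lemma JU_lvl: assumes "a \<in> carrier R" "s \<in> S" shows "(J a \<otimes>\<^bsub>C\<^esub> U s) n = cls n (a, s)"
proof -
  have "(J a \<otimes>\<^bsub>C\<^esub> U s) n = cls n (frac_mult R (a, \<one>) (\<one>, s))"
    using assms by (intro Cmult_lvl U_closed J_closed U_mem J_mem)
  also have "\<dots> = cls n (a, s)"
    unfolding frac_mult_def fst_conv snd_conv using assms one_S by (intro cls_eqI rel_eqX) (auto intro!: S_mult)
  finally show ?thesis .
qed

lemma finsum_lvl:
  assumes "finite K" "\<And>k. k \<in> K \<Longrightarrow> f k \<in> carrier C" "\<And>k. k \<in> K \<Longrightarrow> g k \<in> carrier R"
    "\<And>k. k \<in> K \<Longrightarrow> f k n = cls n (g k, d)" "d \<in> S"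
  shows "(finsum C f K) n = cls n (finsum R g K, d)"
  using assms
proof (induction K rule: finite_induct)
  case empty
  have "cls n (\<zero>, \<one>) = cls n (\<zero>, d)" using empty one_S by (intro cls_eqI rel_eqX) auto
  thus ?case by (simp add: Czero)
next
  case (insert k K)
  have fK: "f \<in> K \<rightarrow> carrier C" "g \<in> K \<rightarrow> carrier R" using insert by auto
  have IH: "(finsum C f K) n = cls n (finsum R g K, d)" using insert by auto
  have "(finsum C f (insert k K)) n = (f k \<oplus>\<^bsub>C\<^esub> finsum C f K) n"
    using insert fK by (subst CC.finsum_insert) auto
  also have "\<dots> = cls n (frac_add R (g k, d) (finsum R g K, d))"
    using insert fK IH by (intro Cadd_lvl CC.finsum_closed) (auto intro!: cls_self finsum_closed)
  also have "\<dots> = cls n (g k \<otimes> d \<oplus> finsum R g K \<otimes> d, d \<otimes> d)" by (simp add: frac_add_def)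
  also have "\<dots> = cls n (g k \<oplus> finsum R g K, d)"
  proof -
    have c: "g k \<in> carrier R" "finsum R g K \<in> carrier R" "d \<in> carrier R" using insert fK by auto
    show ?thesis
      apply (intro cls_eqI rel_eqX)
      subgoal using c by algebra
      using insert fK c by (auto intro!: S_mult)
  qed
  also have "g k \<oplus> finsum R g K = finsum R g (insert k K)"
    using insert fK by (subst finsum_insert) auto
  finally show ?case .
qed

lemma add_pow_lvl:
  assumes "z \<in> carrier C" "g \<in> carrier R" "d \<in> S" "z n = cls n (g, d)"
  shows "(add_pow C (N::nat) z) n = cls n (add_pow R N g, d)"
proof (induction N)
  case 0
  have "cls n (\<zero>, \<one>) = cls n (\<zero>, d)" using assms one_S by (intro cls_eqI rel_eqX) auto
  thus ?case by (simp add: Czero)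
next
  case (Suc N)
  have "(add_pow C (Suc N) z) n = (add_pow C N z \<oplus>\<^bsub>C\<^esub> z) n"
    by (simp add: CC.add.nat_pow_Suc)
  also have "\<dots> = cls n (frac_add R (add_pow R N g, d) (g, d))"
    using assms Suc by (intro Cadd_lvl CC.add.nat_pow_closed) (auto intro!: cls_self add.nat_pow_closed)
  also have "\<dots> = cls n (add_pow R N g \<otimes> d \<oplus> g \<otimes> d, d \<otimes> d)" by (simp add: frac_add_def)
  also have "\<dots> = cls n (add_pow R N g \<oplus> g, d)"
  proof -
    have c: "add_pow R N g \<in> carrier R" "g \<in> carrier R" "d \<in> carrier R" using assms by (auto intro: add.nat_pow_closed)
    show ?thesis
      apply (intro cls_eqI rel_eqX)
      subgoal using c by algebra
      using assms c by (auto intro!: S_mult)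
  qed
  finally show ?case by (simp add: add.nat_pow_Suc)
qed

end

locale LE = LS +
  fixes e :: "'a \<Rightarrow> nat \<Rightarrow> 'a"
  assumes rx: "rexp R I e"
    and Sfix: "S \<subseteq> fixed_elems R e"
begin

lemma e_car: "c \<in> carrier R \<Longrightarrow> e c i \<in> carrier R"
  using rx unfolding rexp_def rser_def by blast

lemma e_rser: "c \<in> carrier R \<Longrightarrow> \<exists>N. \<forall>i\<ge>N. e c i \<in> I n"
  using rx unfolding rexp_def rser_def by blast

lemma e_add: "c \<in> carrier R \<Longrightarrow> d \<in> carrier R \<Longrightarrow> e (c \<oplus> d) i = e c i \<oplus> e d i"
  using rx unfolding rexp_def by metis

lemma e_mult: "c \<in> carrier R \<Longrightarrow> d \<in> carrier R \<Longrightarrow> e (c \<otimes> d) = ser_mult R (e c) (e d)"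
  using rx unfolding rexp_def by blast

lemma e_one: "e \<one> = (\<lambda>i. if i = 0 then \<one> else \<zero>)"
  using rx unfolding rexp_def by blast

lemma e_cont: "\<exists>m. \<forall>c\<in>I m. \<forall>i. e c i \<in> I n"
  using rx unfolding rexp_def by blast

lemma e_0: "c \<in> carrier R \<Longrightarrow> e c 0 = c"
  using rx unfolding rexp_def by blast

lemma e_coc: "c \<in> carrier R \<Longrightarrow> e (e c i) j = add_pow R ((i + j) choose i) (e c (i + j))"
  using rx unfolding rexp_def by blast

lemma e_fix: "s \<in> S \<Longrightarrow> e s = (\<lambda>i. if i = 0 then s else \<zero>)"
  using Sfix unfolding fixed_elems_def by blast

lemma e_zero: "e \<zero> i = \<zero>"
proof -
  have "e \<zero> i = e \<zero> i \<oplus> e \<zero> i" using e_add[of \<zero> \<zero> i] by simp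
  moreover have "e \<zero> i \<in> carrier R" by (simp add: e_car)
  ultimately show ?thesis by (metis l_zero add.right_cancel zero_closed)
qed

lemma e_neg: "c \<in> carrier R \<Longrightarrow> e (\<ominus> c) i = \<ominus> e c i"
proof -
  assume c: "c \<in> carrier R"
  have "e (\<ominus> c) i \<oplus> e c i = \<zero>" using e_add[of "\<ominus> c" c i] c e_zero by (simp add: l_neg)
  thus ?thesis using c by (intro minus_equality[symmetric]) (auto simp: e_car)
qed

lemma e_minus: "c \<in> carrier R \<Longrightarrow> d \<in> carrier R \<Longrightarrow> e (c \<ominus> d) i = e c i \<ominus> e d i"
  by (simp add: minus_eq e_add e_neg)

lemma e_smul: "s \<in> S \<Longrightarrow> c \<in> carrier R \<Longrightarrow> e (s \<otimes> c) i = s \<otimes> e c i"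
  using e_mult[of s c] e_fix[of s] finsum_delta0[of R s "e c" i] is_cring e_car
  by (simp add: ser_mult_def)

lemma e_smul': "s \<in> S \<Longrightarrow> c \<in> carrier R \<Longrightarrow> e (c \<otimes> s) i = e c i \<otimes> s"
  using e_smul[of s c i] by (simp add: m_comm e_car)

definition "m0 n = (SOME m. \<forall>c\<in>I m. \<forall>i. e c i \<in> I n)"
definition "M n = n + (\<Sum>k\<le>n. m0 k)"

lemma m0: "c \<in> I (m0 n) \<Longrightarrow> e c i \<in> I n"
  using someI_ex[OF e_cont[of n]] unfolding m0_def by blast

lemma M_ge: "n \<le> M n" by (simp add: M_def)

lemma M_mono: "n \<le> n' \<Longrightarrow> M n \<le> M n'"
  unfolding M_def by (intro add_mono sum_mono2) auto

lemma M_cont: "M n \<le> m \<Longrightarrow> c \<in> I m \<Longrightarrow> e c i \<in> I n"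
proof -
  assume a: "M n \<le> m" "c \<in> I m"
  have "m0 n \<le> (\<Sum>k\<le>n. m0 k)" by (rule member_le_sum) auto
  hence "m0 n \<le> M n" unfolding M_def by simp
  hence "c \<in> I (m0 n)" using a I_anti by (meson le_trans subsetD)
  thus ?thesis by (rule m0)
qed

lemma E_resp: assumes "rel m (a, s) (b, t)" "M n \<le> m" shows "rel n (e a i, s) (e b i, t)"
proof -
  obtain u where u: "a \<in> carrier R" "s \<in> S" "b \<in> carrier R" "t \<in> S" "u \<in> S" "u \<otimes> (a \<otimes> t \<ominus> b \<otimes> s) \<in> I m"
    using assms(1) rel_elim' by metis
  have "e (u \<otimes> (a \<otimes> t \<ominus> b \<otimes> s)) i \<in> I n" using M_cont[OF assms(2) u(6)] .
  moreover have "e (u \<otimes> (a \<otimes> t \<ominus> b \<otimes> s)) i = u \<otimes> (e a i \<otimes> t \<ominus> e b i \<otimes> s)"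
    using u by (simp add: e_smul e_minus e_smul')
  ultimately show ?thesis using u by (intro rel_intro'[where u=u]) (auto simp: e_car)
qed

definition "E x i = (\<lambda>n. cls n (e (fst (rp x (M n))) i, snd (rp x (M n))))"

lemma KE: assumes "x \<in> carrier C" "M n \<le> k" "(a, s) \<in> x k" shows "E x i n = cls n (e a i, s)"
proof -
  obtain a0 s0 where r: "rp x (M n) = (a0, s0)" by fastforce
  have "(a, s) \<in> x (M n)" using Cdec[OF assms(1,2)] assms(3) by blast
  hence "(a, s) \<in> cls (M n) (a0, s0)" using Clvl[OF assms(1) rp_in[OF assms(1)]] r by metis
  hence "rel (M n) (a0, s0) (a, s)" by (simp add: cls_def2)
  hence "rel n (e a0 i, s0) (e a i, s)" by (rule E_resp) simp
  thus ?thesis unfolding E_def r fst_conv snd_conv by (rule cls_eqI)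
qed

lemma rp_obtain: assumes "x \<in> carrier C" obtains a s where "(a, s) \<in> x n" "a \<in> carrier R" "s \<in> S"
  using Crep[OF assms] by metis

lemma E_closed: assumes "x \<in> carrier C" shows "E x i \<in> carrier C"
  unfolding Ccar
proof (intro conjI allI)
  fix n
  show "\<exists>p\<in>carrier R \<times> S. E x i n = cls n p"
  proof -
    have "(e (fst (rp x (M n))) i, snd (rp x (M n))) \<in> carrier R \<times> S"
      using rp_fst[OF assms] rp_snd[OF assms] e_car by auto
    thus ?thesis unfolding E_def by blast
  qed
  obtain a s where a: "(a, s) \<in> x (M (Suc n))" "a \<in> carrier R" "s \<in> S" by (rule rp_obtain[OF assms])
  have "E x i (Suc n) = cls (Suc n) (e a i, s)" using KE[OF assms _ a(1)] by simp
  moreover have "E x i n = cls n (e a i, s)" using KE[OF assms _ a(1)] M_mono[of n "Suc n"] by simp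
  ultimately show "E x i (Suc n) \<subseteq> E x i n" using cls_mono[of n "Suc n"] by simp
qed

lemma E_mem: assumes "x \<in> carrier C" "M n \<le> k" "(a, s) \<in> x k" shows "(e a i, s) \<in> E x i n"
proof -
  have "(a, s) \<in> carrier R \<times> S" using Clvl(2)[OF assms(1,3)] .
  thus ?thesis using KE[OF assms] by (auto intro!: cls_self e_car)
qed

lemma E_rser: assumes "c \<in> carrier C" shows "E c \<in> rser C T"
  unfolding rser_def
proof (intro CollectI conjI allI)
  show "E c i \<in> carrier C" for i using E_closed[OF assms] .
  fix n
  obtain a s where a: "(a, s) \<in> c (M n)" "a \<in> carrier R" "s \<in> S" by (rule rp_obtain[OF assms])
  obtain N where N: "\<forall>i\<ge>N. e a i \<in> I n" using e_rser[OF a(2)] by blast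
  have "E c i \<in> T n" if "i \<ge> N" for i
  proof -
    have "E c i n = cls n (e a i, s)" using KE[OF assms _ a(1)] by simp
    also have "\<dots> = cls n (\<zero>, \<one>)"
    proof (intro cls_eqI rel_intro'[where u="\<one>"])
      have "\<one> \<otimes> (e a i \<otimes> \<one> \<ominus> \<zero> \<otimes> s) = e a i" using a e_car by (simp add: minus_eq)
      thus "\<one> \<otimes> (e a i \<otimes> \<one> \<ominus> \<zero> \<otimes> s) \<in> I n" using N that by simp
    qed (use a one_S e_car in auto)
    finally show ?thesis using E_closed[OF assms] by (simp add: Tdef Czero)
  qed
  thus "\<exists>N. \<forall>i\<ge>N. E c i \<in> T n" by blast
qed

lemma E_add: assumes "c \<in> carrier C" "d \<in> carrier C" shows "E (c \<oplus>\<^bsub>C\<^esub> d) = (\<lambda>i. E c i \<oplus>\<^bsub>C\<^esub> E d i)"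
proof (intro ext)
  fix i n
  obtain a s where a: "(a, s) \<in> c (M n)" "a \<in> carrier R" "s \<in> S" by (rule rp_obtain[OF assms(1)])
  obtain b t where b: "(b, t) \<in> d (M n)" "b \<in> carrier R" "t \<in> S" by (rule rp_obtain[OF assms(2)])
  have "E (c \<oplus>\<^bsub>C\<^esub> d) i n = cls n (e (a \<otimes> t \<oplus> b \<otimes> s) i, s \<otimes> t)"
  proof -
    have "(a \<otimes> t \<oplus> b \<otimes> s, s \<otimes> t) \<in> (c \<oplus>\<^bsub>C\<^esub> d) (M n)"
      using Cadd_mem[OF assms a(1) b(1)] by (simp add: frac_add_def)
    thus ?thesis using KE[OF Cadd_closed[OF assms] order_refl] by simp
  qed
  also have "\<dots> = cls n (e a i \<otimes> t \<oplus> e b i \<otimes> s, s \<otimes> t)"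
    using a b by (simp add: e_add e_smul')
  also have "\<dots> = (E c i \<oplus>\<^bsub>C\<^esub> E d i) n"
    using Cadd_lvl[OF E_closed[OF assms(1)] E_closed[OF assms(2)] E_mem[OF assms(1) _ a(1)] E_mem[OF assms(2) _ b(1)]]
    by (simp add: frac_add_def)
  finally show "E (c \<oplus>\<^bsub>C\<^esub> d) i n = (E c i \<oplus>\<^bsub>C\<^esub> E d i) n" .
qed

lemma E_mult: assumes "c \<in> carrier C" "d \<in> carrier C" shows "E (c \<otimes>\<^bsub>C\<^esub> d) = ser_mult C (E c) (E d)"
proof (intro ext)
  fix i n
  obtain a s where a: "(a, s) \<in> c (M n)" "a \<in> carrier R" "s \<in> S" by (rule rp_obtain[OF assms(1)])
  obtain b t where b: "(b, t) \<in> d (M n)" "b \<in> carrier R" "t \<in> S" by (rule rp_obtain[OF assms(2)])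
  have "E (c \<otimes>\<^bsub>C\<^esub> d) i n = cls n (e (a \<otimes> b) i, s \<otimes> t)"
  proof -
    have "(a \<otimes> b, s \<otimes> t) \<in> (c \<otimes>\<^bsub>C\<^esub> d) (M n)"
      using Cmult_mem[OF assms a(1) b(1)] by (simp add: frac_mult_def)
    thus ?thesis using KE[OF Cmult_closed[OF assms] order_refl] by simp
  qed
  also have "\<dots> = cls n (finsum R (\<lambda>k. e a k \<otimes> e b (i - k)) {..i}, s \<otimes> t)"
    using a b by (simp add: e_mult ser_mult_def)
  also have "\<dots> = (finsum C (\<lambda>k. E c k \<otimes>\<^bsub>C\<^esub> E d (i - k)) {..i}) n"
  proof (rule finsum_lvl[symmetric])
    fix k
    show "E c k \<otimes>\<^bsub>C\<^esub> E d (i - k) \<in> carrier C" using assms by (intro Cmult_closed E_closed)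
    show "e a k \<otimes> e b (i - k) \<in> carrier R" using a b by (simp add: e_car)
    show "(E c k \<otimes>\<^bsub>C\<^esub> E d (i - k)) n = cls n (e a k \<otimes> e b (i - k), s \<otimes> t)"
      using Cmult_lvl[OF E_closed[OF assms(1)] E_closed[OF assms(2)] E_mem[OF assms(1) _ a(1)] E_mem[OF assms(2) _ b(1)]]
      by (simp add: frac_mult_def)
  qed (use a b S_mult in auto)
  also have "\<dots> = ser_mult C (E c) (E d) i n" by (simp add: ser_mult_def)
  finally show "E (c \<otimes>\<^bsub>C\<^esub> d) i n = ser_mult C (E c) (E d) i n" .
qed

lemma E_one: "E \<one>\<^bsub>C\<^esub> = (\<lambda>i. if i = 0 then \<one>\<^bsub>C\<^esub> else \<zero>\<^bsub>C\<^esub>)"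
proof (intro ext)
  fix i n
  have "E \<one>\<^bsub>C\<^esub> i n = cls n (e \<one> i, \<one>)" using KE[OF Cone_closed order_refl Cone_mem] by simp
  thus "E \<one>\<^bsub>C\<^esub> i n = (if i = 0 then \<one>\<^bsub>C\<^esub> else \<zero>\<^bsub>C\<^esub>) n"
    by (simp add: e_one Cone Czero)
qed

lemma E_cont: "\<exists>m. \<forall>c\<in>T m. \<forall>i. E c i \<in> T n"
proof (intro exI ballI allI)
  fix c i assume c: "c \<in> T (M n)"
  hence cc: "c \<in> carrier C" "c (M n) = \<zero>\<^bsub>C\<^esub> (M n)" by (auto simp: Tdef)
  have "(\<zero>, \<one>) \<in> c (M n)" using cc Czero_mem by simp
  hence "E c i n = cls n (e \<zero> i, \<one>)" using KE[OF cc(1) order_refl] by simp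
  thus "E c i \<in> T n" using E_closed[OF cc(1)] by (simp add: e_zero Tdef Czero)
qed

lemma E_0: assumes "c \<in> carrier C" shows "E c 0 = c"
proof
  fix n
  obtain a s where a: "(a, s) \<in> c (M n)" "a \<in> carrier R" "s \<in> S" by (rule rp_obtain[OF assms])
  have "(a, s) \<in> c n" using Cdec[OF assms M_ge] a by blast
  thus "E c 0 n = c n" using KE[OF assms _ a(1)] Clvl[OF assms] a by (simp add: e_0)
qed

lemma E_coc: assumes "c \<in> carrier C" shows "E (E c i) j = add_pow C ((i + j) choose i) (E c (i + j))"
proof
  fix n
  obtain a s where a: "(a, s) \<in> c (M (M n))" "a \<in> carrier R" "s \<in> S" by (rule rp_obtain[OF assms])
  have m: "(e a i, s) \<in> E c i (M n)" using E_mem[OF assms _ a(1)] by simp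
  have "E (E c i) j n = cls n (e (e a i) j, s)" using KE[OF E_closed[OF assms] _ m] by simp
  also have "\<dots> = cls n (add_pow R ((i + j) choose i) (e a (i + j)), s)" using a by (simp add: e_coc)
  also have "\<dots> = add_pow C ((i + j) choose i) (E c (i + j)) n"
  proof (rule add_pow_lvl[symmetric])
    show "E c (i + j) \<in> carrier C" using E_closed[OF assms] .
    show "e a (i + j) \<in> carrier R" using a e_car by simp
    show "s \<in> S" by (rule a)
    have "M n \<le> M (M n)" using M_mono[OF M_ge] .
    thus "E c (i + j) n = cls n (e a (i + j), s)" using KE[OF assms _ a(1)] by simp
  qed
  finally show "E (E c i) j n = add_pow C ((i + j) choose i) (E c (i + j)) n" .
qed

lemma E_rexp: "rexp C T E"
  unfolding rexp_def
  by (intro conjI ballI allI C_complete E_rser E_add E_mult E_one E_cont E_0 E_coc)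

lemma E_J: assumes "b \<in> carrier R" shows "cloc_j R I S (e b i) = E (cloc_j R I S b) i"
proof
  fix n
  show "cloc_j R I S (e b i) n = E (cloc_j R I S b) i n"
    unfolding J_eq using KE[OF J_closed[OF assms] order_refl J_mem[OF assms]] by (simp add: J_def)
qed

lemma E_unique:
  assumes rx': "rexp C T E'" and ag: "\<forall>b\<in>carrier R. \<forall>i. cloc_j R I S (e b i) = E' (cloc_j R I S b) i"
    and x: "x \<in> carrier C"
  shows "E' x = E x"
proof (intro ext)
  fix i n
  have E'car: "\<And>c i. c \<in> carrier C \<Longrightarrow> E' c i \<in> carrier C"
    using rx' unfolding rexp_def rser_def by blast
  have E'add: "\<And>c d. c \<in> carrier C \<Longrightarrow> d \<in> carrier C \<Longrightarrow> E' (c \<oplus>\<^bsub>C\<^esub> d) = (\<lambda>i. E' c i \<oplus>\<^bsub>C\<^esub> E' d i)"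
    using rx' unfolding rexp_def by blast
  have E'mult: "\<And>c d. c \<in> carrier C \<Longrightarrow> d \<in> carrier C \<Longrightarrow> E' (c \<otimes>\<^bsub>C\<^esub> d) = ser_mult C (E' c) (E' d)"
    using rx' unfolding rexp_def by blast
  have "\<exists>m. \<forall>c\<in>T m. \<forall>i. E' c i \<in> T n"
    using rx' unfolding rexp_def by blast
  then obtain m' where m': "\<And>c i. c \<in> T m' \<Longrightarrow> E' c i \<in> T n" by blast
  have agJ: "\<And>b i. b \<in> carrier R \<Longrightarrow> E' (J b) i = J (e b i)"
    using ag unfolding J_eq by metis
  define k where "k = max m' (M n)"
  obtain a s where a: "(a, s) \<in> x k" "a \<in> carrier R" "s \<in> S" by (rule rp_obtain[OF x])
  define y where "y = J a \<otimes>\<^bsub>C\<^esub> U s"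
  have y: "y \<in> carrier C" unfolding y_def using a by (intro Cmult_closed J_closed U_closed)
  have Js: "J s \<in> carrier C" "U s \<in> carrier C" using a J_closed U_closed by auto
  have "y k = x k" unfolding y_def JU_lvl[OF a(2,3)] using Clvl[OF x a(1)] by simp
  hence "(x \<ominus>\<^bsub>C\<^esub> y) k = \<zero>\<^bsub>C\<^esub> k" using Cminus_lvl[OF x y] by simp
  hence w: "x \<ominus>\<^bsub>C\<^esub> y \<in> T m'" using T_anti[of m' k] x y by (auto simp: k_def Tdef)
  have xy: "x = y \<oplus>\<^bsub>C\<^esub> (x \<ominus>\<^bsub>C\<^esub> y)"
    using CC.a_lcomm[of y x "\<ominus>\<^bsub>C\<^esub> y"] x y by (simp add: CC.minus_eq CC.r_neg)
  have "E' x i = E' y i \<oplus>\<^bsub>C\<^esub> E' (x \<ominus>\<^bsub>C\<^esub> y) i"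
    using E'add[OF y CC.minus_closed[OF x y]] xy by metis
  moreover have "E' (x \<ominus>\<^bsub>C\<^esub> y) i n = \<zero>\<^bsub>C\<^esub> n" using m'[OF w] by (simp add: Tdef)
  ultimately have "E' x i n = (E' y i \<oplus>\<^bsub>C\<^esub> \<zero>\<^bsub>C\<^esub>) n" using Cadd_cong by metis
  hence ex: "E' x i n = E' y i n" using E'car[OF y] by simp
  have EJs: "E' (J s) j = (if j = 0 then J s else \<zero>\<^bsub>C\<^esub>)" for j
    using agJ[of s j] a e_fix[of s] J_zero by simp
  have yJ: "y \<otimes>\<^bsub>C\<^esub> J s = J a"
    unfolding y_def using a Js J_closed[OF a(2)] UJ[OF a(3)] by (simp add: CC.m_assoc)
  have "E' y i \<otimes>\<^bsub>C\<^esub> J s = ser_mult C (E' y) (E' (J s)) i"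
    unfolding ser_mult_def EJs
    by (rule finsum_delta0'[symmetric]) (use C_cring Js E'car[OF y] in auto)
  also have "\<dots> = E' (J a) i" using E'mult[OF y Js(1)] yJ by simp
  also have "\<dots> = J (e a i)" using agJ a by simp
  finally have h: "E' y i \<otimes>\<^bsub>C\<^esub> J s = J (e a i)" .
  have "E' y i = E' y i \<otimes>\<^bsub>C\<^esub> (J s \<otimes>\<^bsub>C\<^esub> U s)"
    using UJ[OF a(3)] Js E'car[OF y] by (simp add: CC.m_comm)
  also have "\<dots> = J (e a i) \<otimes>\<^bsub>C\<^esub> U s"
    using h Js E'car[OF y] by (simp add: CC.m_assoc[symmetric])
  finally have "E' y i n = cls n (e a i, s)" using JU_lvl[OF e_car[OF a(2)] a(3)] by simp
  moreover have "E x i n = cls n (e a i, s)" using KE[OF x _ a(1)] by (simp add: k_def)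
  ultimately show "E' x i n = E x i n" using ex by simp
qed

end

lemma main:
  assumes "rexp B I e" "S \<subseteq> fixed_elems B e" "\<one>\<^bsub>B\<^esub> \<in> S" "\<forall>s\<in>S. \<forall>t\<in>S. s \<otimes>\<^bsub>B\<^esub> t \<in> S"
  shows "\<exists>E. rexp (cloc B I S) (cloc_top B I S) E
           \<and> (\<forall>b\<in>carrier B. \<forall>i. cloc_j B I S (e b i) = E (cloc_j B I S b) i)
           \<and> (\<forall>E'. rexp (cloc B I S) (cloc_top B I S) E'
                   \<and> (\<forall>b\<in>carrier B. \<forall>i. cloc_j B I S (e b i) = E' (cloc_j B I S b) i)
                   \<longrightarrow> (\<forall>x\<in>carrier (cloc B I S). E' x = E x))"
proof -
  have lt: "lin_top_ring B I" using assms(1) unfolding rexp_def complete_ring_def by blast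
  have Ssub: "S \<subseteq> carrier B" using assms(2) unfolding fixed_elems_def by blast
  interpret LE B I S e
    apply (rule LE.intro)
    subgoal using lt Ssub assms unfolding lin_top_ring_def by (intro LS.intro LS_axioms.intro) auto
    subgoal using assms by (intro LE_axioms.intro) auto
    done
  show ?thesis
    using E_rexp E_J E_unique by blast
qed

theorem proposition2p6:
  fixes B :: "('a, 'b) ring_scheme" and I :: "nat \<Rightarrow> 'a set"
    and e :: "'a \<Rightarrow> nat \<Rightarrow> 'a" and S :: "'a set"
  assumes "complete_ring B I"
    and "rexp B I e"
    and "S \<subseteq> fixed_elems B e"
    and "\<one>\<^bsub>B\<^esub> \<in> S"
    and "\<forall>s\<in>S. \<forall>t\<in>S. s \<otimes>\<^bsub>B\<^esub> t \<in> S"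
  shows "\<exists>E. rexp (cloc B I S) (cloc_top B I S) E
           \<and> (\<forall>b\<in>carrier B. \<forall>i. cloc_j B I S (e b i) = E (cloc_j B I S b) i)
           \<and> (\<forall>E'. rexp (cloc B I S) (cloc_top B I S) E'
                   \<and> (\<forall>b\<in>carrier B. \<forall>i. cloc_j B I S (e b i) = E' (cloc_j B I S b) i)
                   \<longrightarrow> (\<forall>x\<in>carrier (cloc B I S). E' x = E x))"
  using main[OF assms(2-5)] .

end
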